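(* Let $0<\beta<\alpha$ and consider $\frac{dx}{dt}=-\alpha x+f(x,y)$, $\frac{dy}{dt}=\beta y+g(x,y)$, where $f,g$ are real analytic at $(0,0)$, vanish at $(0,0)$ together with their first partial derivatives, and are $C^4$ near a homoclinic solution $\ell(s)=(a(s),b(s))$ of $(0,0)$ which approaches $(0,0)$ along the positive $x$-axis direction as $s\to+\infty$ and along the positive $y$-axis direction as $s\to-\infty$. Let $h$ be continuous (indeed $C^4$) near $\ell$ and let $\omega\in\mathbb R$. Then the integrals $A=\int_{-\infty}^{\infty}(u(s)+v(s))h(a(s),b(s))e^{-\int_0^sE(\tau)d\tau}ds$, $C=\int_{-\infty}^{\infty}(u(s)+v(s))\cos(\omega s)e^{-\int_0^sE(\tau)d\tau}ds$, $S=\int_{-\infty}^{\infty}(u(s)+v(s))\sin(\omega s)e^{-\int_0^sE(\tau)d\tau}ds$ are absolutely convergent.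
   Context: $(u(s),v(s))=\|\ell'(s)\|^{-1}\ell'(s)$ is the unit tangent to $\ell$, and $E(s)=v^2(s)(-\alpha+\partial_xf(\ell(s)))+u^2(s)(\beta+\partial_yg(\ell(s)))-u(s)v(s)(\partial_yf(\ell(s))+\partial_xg(\ell(s)))$. *)

theory Defs
  imports "HOL-Analysis.Analysis"
begin

definition partial_x :: "(real \<times> real \<Rightarrow> real) \<Rightarrow> real \<times> real \<Rightarrow> real" where
  "partial_x F p = deriv (\<lambda>t. F (t, snd p)) (fst p)"

definition partial_y :: "(real \<times> real \<Rightarrow> real) \<Rightarrow> real \<times> real \<Rightarrow> real" where
  "partial_y F p = deriv (\<lambda>t. F (fst p, t)) (snd p)"

fun iter_partial :: "bool list \<Rightarrow> (real \<times> real \<Rightarrow> real) \<Rightarrow> real \<times> real \<Rightarrow> real" where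
  "iter_partial [] F = F"
| "iter_partial (b # bs) F = (if b then partial_y else partial_x) (iter_partial bs F)"

definition C_k_on :: "nat \<Rightarrow> (real \<times> real) set \<Rightarrow> (real \<times> real \<Rightarrow> real) \<Rightarrow> bool" where
  "C_k_on k U F \<longleftrightarrow>
     (\<forall>bs. length bs \<le> k \<longrightarrow> continuous_on U (iter_partial bs F)) \<and>
     (\<forall>bs. length bs < k \<longrightarrow> (\<forall>p\<in>U.
         (\<lambda>t. iter_partial bs F (t, snd p)) differentiable (at (fst p)) \<and>
         (\<lambda>t. iter_partial bs F (fst p, t)) differentiable (at (snd p))))"

text \<open>Real analyticity at a point: locally the sum of a convergent double power series
  (for real series, unconditional summation = absolute convergence).\<close>
definition real_analytic_at2 :: "(real \<times> real \<Rightarrow> real) \<Rightarrow> real \<times> real \<Rightarrow> bool" where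
  "real_analytic_at2 F p \<longleftrightarrow>
     (\<exists>r>0. \<exists>c :: nat \<times> nat \<Rightarrow> real. \<forall>x y. \<bar>x - fst p\<bar> < r \<and> \<bar>y - snd p\<bar> < r \<longrightarrow>
        ((\<lambda>(i, j). c (i, j) * (x - fst p) ^ i * (y - snd p) ^ j) has_sum F (x, y)) UNIV)"

definition oint :: "real \<Rightarrow> real \<Rightarrow> (real \<Rightarrow> real) \<Rightarrow> real" where
  "oint a b F = (if a \<le> b then integral {a..b} F else - integral {b..a} F)"

definition tan_u :: "(real \<Rightarrow> real \<times> real) \<Rightarrow> real \<Rightarrow> real" where
  "tan_u l s = fst (vector_derivative l (at s)) / norm (vector_derivative l (at s))"

definition tan_v :: "(real \<Rightarrow> real \<times> real) \<Rightarrow> real \<Rightarrow> real" where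
  "tan_v l s = snd (vector_derivative l (at s)) / norm (vector_derivative l (at s))"

definition E_fun :: "real \<Rightarrow> real \<Rightarrow> (real \<times> real \<Rightarrow> real) \<Rightarrow> (real \<times> real \<Rightarrow> real)
    \<Rightarrow> (real \<Rightarrow> real \<times> real) \<Rightarrow> real \<Rightarrow> real" where
  "E_fun \<alpha> \<beta> f g l s =
     (tan_v l s)\<^sup>2 * (- \<alpha> + partial_x f (l s))
     + (tan_u l s)\<^sup>2 * (\<beta> + partial_y g (l s))
     - tan_u l s * tan_v l s * (partial_y f (l s) + partial_x g (l s))"

end

theory Submission
  imports Defs
begin



lemma mvt_bound:
  fixes \<phi> :: "real \<Rightarrow> real"
  assumes d: "\<And>t. \<bar>t\<bar> \<le> \<bar>x\<bar> \<Longrightarrow> \<phi> differentiable (at t)"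
    and b: "\<And>t. \<bar>t\<bar> \<le> \<bar>x\<bar> \<Longrightarrow> \<bar>deriv \<phi> t\<bar> \<le> B"
  shows "\<bar>\<phi> x - \<phi> 0\<bar> \<le> B * \<bar>x\<bar>"
proof (cases "x = 0")
  case True then show ?thesis by simp
next
  case False
  show ?thesis
  proof (cases "x > 0")
    case True
    have "continuous_on {0..x} \<phi>"
      using d True by (intro continuous_at_imp_continuous_on ballI differentiable_imp_continuous_within) auto
    from MVT[OF True this] obtain l z where z: "0 < z" "z < x" "DERIV \<phi> z :> l" "\<phi> x - \<phi> 0 = (x - 0) * l"
      using d True by auto
    have "deriv \<phi> z = l" using z(3) by (rule DERIV_imp_deriv)
    then have "\<bar>l\<bar> \<le> B" using b[of z] z True by auto
    then show ?thesis using z(4) True by (simp add: abs_mult mult.commute mult_left_mono)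
  next
    case False
    then have x: "x < 0" using \<open>x \<noteq> 0\<close> by auto
    have "continuous_on {x..0} \<phi>"
      using d x by (intro continuous_at_imp_continuous_on ballI differentiable_imp_continuous_within) auto
    from MVT[OF x this] obtain l z where z: "x < z" "z < 0" "DERIV \<phi> z :> l" "\<phi> 0 - \<phi> x = (0 - x) * l"
      using d x by auto
    have "deriv \<phi> z = l" using z(3) by (rule DERIV_imp_deriv)
    then have "\<bar>l\<bar> \<le> B" using b[of z] z x by auto
    then show ?thesis using z(4) x by (simp add: abs_mult mult.commute mult_left_mono abs_minus_commute)
  qed
qed

lemma norm_pair_mono: "\<bar>t::real\<bar> \<le> \<bar>x\<bar> \<Longrightarrow> norm (t, y::real) \<le> norm (x, y)"
  by (simp add: norm_Pair abs_le_square_iff)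

lemma norm_pair_mono2: "\<bar>t::real\<bar> \<le> \<bar>y\<bar> \<Longrightarrow> norm (x::real, t) \<le> norm (x, y)"
  by (simp add: norm_Pair abs_le_square_iff)

lemma small:
  assumes U: "open U" "(0,0) \<in> U" and C: "C_k_on 4 U f"
    and f0: "f (0,0) = 0" "partial_x f (0,0) = 0" "partial_y f (0,0) = 0" and e: "e > 0"
  shows "\<exists>d>0. \<forall>p. norm p < d \<longrightarrow> \<bar>f p\<bar> \<le> e * norm p"
proof -
  have cx: "continuous_on U (partial_x f)" and cy: "continuous_on U (partial_y f)"
  proof -
    have "continuous_on U (iter_partial [False] f)" "continuous_on U (iter_partial [True] f)"
      using C unfolding C_k_on_def by (auto simp del: iter_partial.simps)
    then show "continuous_on U (partial_x f)" "continuous_on U (partial_y f)" by simp_all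
  qed
  have dif: "\<And>p. p \<in> U \<Longrightarrow> (\<lambda>t. f (t, snd p)) differentiable (at (fst p)) \<and> (\<lambda>t. f (fst p, t)) differentiable (at (snd p))"
  proof -
    fix p assume "p \<in> U"
    then have "(\<lambda>t. iter_partial [] f (t, snd p)) differentiable (at (fst p)) \<and> (\<lambda>t. iter_partial [] f (fst p, t)) differentiable (at (snd p))"
      using C unfolding C_k_on_def by (auto simp del: iter_partial.simps)
    then show "(\<lambda>t. f (t, snd p)) differentiable (at (fst p)) \<and> (\<lambda>t. f (fst p, t)) differentiable (at (snd p))" by simp
  qed
  have "isCont (partial_x f) (0,0)" using cx U by (simp add: continuous_on_eq_continuous_at)
  then obtain d1 where d1: "d1 > 0" "\<And>p. dist p (0,0) < d1 \<Longrightarrow> dist (partial_x f p) (partial_x f (0,0)) < e/2"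
    unfolding continuous_at_eps_delta using e by (meson half_gt_zero)
  have "isCont (partial_y f) (0,0)" using cy U by (simp add: continuous_on_eq_continuous_at)
  then obtain d2 where d2: "d2 > 0" "\<And>p. dist p (0,0) < d2 \<Longrightarrow> dist (partial_y f p) (partial_y f (0,0)) < e/2"
    unfolding continuous_at_eps_delta using e by (meson half_gt_zero)
  obtain d0 where d0: "d0 > 0" "ball (0,0) d0 \<subseteq> U" using U open_contains_ball by blast
  define d where "d = min d0 (min d1 d2)"
  have "d > 0" using d0 d1 d2 by (simp add: d_def)
  moreover have "\<bar>f p\<bar> \<le> e * norm p" if p: "norm p < d" for p
  proof -
    obtain x y where pxy: "p = (x, y)" by (cases p)
    have inU: "q \<in> U" if "norm q < d" for q proof -
      have "dist (0,0) q < d0" using that by (simp add: d_def dist_norm zero_prod_def[symmetric] norm_minus_commute)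
      then show ?thesis using d0(2) by auto
    qed
    have s1: "\<bar>f (x, y) - f (0, y)\<bar> \<le> e/2 * \<bar>x\<bar>"
    proof (rule mvt_bound[where \<phi> = "\<lambda>t. f (t, y)"])
      fix t assume t: "\<bar>t\<bar> \<le> \<bar>x\<bar>"
      have n: "norm (t, y) < d" using norm_pair_mono[OF t, of y] p pxy by simp
      show "(\<lambda>t. f (t, y)) differentiable (at t)" using dif[OF inU[OF n]] by simp
      have "deriv (\<lambda>t. f (t, y)) t = partial_x f (t, y)" by (simp add: partial_x_def)
      moreover have "\<bar>partial_x f (t, y)\<bar> < e/2" using d1(2)[of "(t,y)"] n f0 by (simp add: d_def dist_norm)
      ultimately show "\<bar>deriv (\<lambda>t. f (t, y)) t\<bar> \<le> e/2" by simp
    qed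
    have s2: "\<bar>f (0, y) - f (0, 0)\<bar> \<le> e/2 * \<bar>y\<bar>"
    proof (rule mvt_bound[where \<phi> = "\<lambda>t. f (0, t)"])
      fix t assume t: "\<bar>t\<bar> \<le> \<bar>y\<bar>"
      have "norm (0::real, t) \<le> norm (x, y)" using norm_pair_mono2[OF t, of 0] norm_pair_mono[of 0 x y] by simp
      then have n: "norm (0::real, t) < d" using p pxy by simp
      show "(\<lambda>t. f (0, t)) differentiable (at t)" using dif[OF inU[OF n]] by simp
      have "deriv (\<lambda>t. f (0, t)) t = partial_y f (0, t)" by (simp add: partial_y_def)
      moreover have "\<bar>partial_y f (0, t)\<bar> < e/2" using d2(2)[of "(0,t)"] n f0 by (simp add: d_def dist_norm)
      ultimately show "\<bar>deriv (\<lambda>t. f (0, t)) t\<bar> \<le> e/2" by simp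
    qed
    have "\<bar>x\<bar> \<le> norm p" "\<bar>y\<bar> \<le> norm p" using norm_fst_le[of x y] norm_snd_le[of y x] pxy by auto
    then have "e/2 * \<bar>x\<bar> \<le> e/2 * norm p" "e/2 * \<bar>y\<bar> \<le> e/2 * norm p"
      using e by (auto intro: mult_left_mono)
    then have "e/2 * \<bar>x\<bar> + e/2 * \<bar>y\<bar> \<le> e * norm p" by linarith
    then show ?thesis using s1 s2 f0 unfolding pxy by linarith
  qed
  ultimately show ?thesis by blast
qed

lemma small_tendsto:
  assumes U: "open U" "(0,0) \<in> U" and C: "C_k_on 4 U f"
    and f0: "f (0,0) = 0" "partial_x f (0,0) = 0" "partial_y f (0,0) = 0"
    and l: "(l \<longlongrightarrow> (0,0)) F"
  shows "((\<lambda>s. f (l s) / norm (l s)) \<longlongrightarrow> 0) F"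
proof (rule tendstoI)
  fix e :: real assume e: "e > 0"
  obtain d where d: "d > 0" "\<And>p. norm p < d \<Longrightarrow> \<bar>f p\<bar> \<le> e/2 * norm p"
    using small[OF U C f0, of "e/2"] e by auto
  have "eventually (\<lambda>s. dist (l s) (0,0) < d) F" using l d(1) by (rule tendstoD)
  then show "eventually (\<lambda>s. dist (f (l s) / norm (l s)) 0 < e) F"
  proof (rule eventually_mono)
    fix s assume "dist (l s) (0,0) < d"
    then have "\<bar>f (l s)\<bar> \<le> e/2 * norm (l s)" using d(2) by (simp add: dist_norm zero_prod_def[symmetric])
    then have "\<bar>f (l s) / norm (l s)\<bar> \<le> e/2"
      using e by (cases "norm (l s) = 0") (auto simp: abs_divide divide_le_eq)
    then have "\<bar>f (l s) / norm (l s)\<bar> < e" using e by linarith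
    then show "dist (f (l s) / norm (l s)) 0 < e" by (simp add: dist_norm)
  qed
qed



lemma scale_lem:
  fixes X Y n :: real assumes n: "n > 0"
  shows "X / sqrt (X\<^sup>2 + Y\<^sup>2) = (X/n) / sqrt ((X/n)\<^sup>2 + (Y/n)\<^sup>2)"
proof -
  have "(X/n)\<^sup>2 + (Y/n)\<^sup>2 = (X\<^sup>2 + Y\<^sup>2) / n\<^sup>2" by (simp add: power_divide add_divide_distrib)
  then have "sqrt ((X/n)\<^sup>2 + (Y/n)\<^sup>2) = sqrt (X\<^sup>2 + Y\<^sup>2) / n"
    using n by (simp add: real_sqrt_divide)
  then show ?thesis using n by simp
qed

lemma scale_lem2:
  fixes X Y n :: real assumes n: "n > 0"
  shows "Y / sqrt (X\<^sup>2 + Y\<^sup>2) = (Y/n) / sqrt ((X/n)\<^sup>2 + (Y/n)\<^sup>2)"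
  using scale_lem[OF n, of Y X] by (simp only: add.commute)

lemma fst_norm_le: "\<bar>fst (z::real\<times>real) / norm z\<bar> \<le> 1"
proof (cases "z = 0")
  case False
  then have "\<bar>fst z\<bar> \<le> norm z" using norm_fst_le[of "fst z" "snd z"] by simp
  then show ?thesis using False by (simp add: abs_divide divide_le_eq_1)
qed simp

lemma snd_norm_le: "\<bar>snd (z::real\<times>real) / norm z\<bar> \<le> 1"
proof (cases "z = 0")
  case False
  then have "\<bar>snd z\<bar> \<le> norm z" using norm_snd_le[of "snd z" "fst z"] by simp
  then show ?thesis using False by (simp add: abs_divide divide_le_eq_1)
qed simp

lemma E_bound_lem:
  fixes a b X Y Z :: real
  assumes "\<bar>a\<bar> \<le> 1" "\<bar>b\<bar> \<le> 1"
  shows "\<bar>b\<^sup>2 * X + a\<^sup>2 * Y - a * b * Z\<bar> \<le> \<bar>X\<bar> + \<bar>Y\<bar> + \<bar>Z\<bar>"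
proof -
  have "b\<^sup>2 \<le> 1" "a\<^sup>2 \<le> 1" "\<bar>a * b\<bar> \<le> 1" using assms
    by (auto simp: abs_le_square_iff[of _ 1, simplified] abs_mult intro: mult_le_one)
  then have "\<bar>b\<^sup>2 * X\<bar> \<le> \<bar>X\<bar>" "\<bar>a\<^sup>2 * Y\<bar> \<le> \<bar>Y\<bar>" "\<bar>a * b * Z\<bar> \<le> \<bar>Z\<bar>"
    by (auto simp: abs_mult intro!: mult_left_le_one_le)
  then show ?thesis by linarith
qed

lemma bounded_lims:
  fixes \<phi> :: "real \<Rightarrow> real"
  assumes c: "continuous_on UNIV \<phi>" and t: "(\<phi> \<longlongrightarrow> L1) at_top" and b: "(\<phi> \<longlongrightarrow> L2) at_bot"
  shows "\<exists>M. \<forall>s. \<bar>\<phi> s\<bar> \<le> M"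
proof -
  have "eventually (\<lambda>s. dist (\<phi> s) L1 < 1) at_top" using t by (rule tendstoD) simp
  then obtain T1 where T1: "\<And>s. s \<ge> T1 \<Longrightarrow> dist (\<phi> s) L1 < 1" by (auto simp: eventually_at_top_linorder)
  have "eventually (\<lambda>s. dist (\<phi> s) L2 < 1) at_bot" using b by (rule tendstoD) simp
  then obtain T2 where T2: "\<And>s. s \<le> T2 \<Longrightarrow> dist (\<phi> s) L2 < 1" by (auto simp: eventually_at_bot_linorder)
  have "compact (\<phi> ` {T2..T1})"
    by (rule compact_continuous_image[OF continuous_on_subset[OF c]]) auto
  then obtain B where B: "\<And>x. x \<in> \<phi> ` {T2..T1} \<Longrightarrow> norm x \<le> B"
    using compact_imp_bounded bounded_iff by metis
  have "\<bar>\<phi> s\<bar> \<le> max B (max (\<bar>L1\<bar> + 1) (\<bar>L2\<bar> + 1))" for s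
  proof (cases "s \<ge> T1")
    case True then show ?thesis using T1[of s] by (auto simp: dist_real_def)
  next
    case False
    show ?thesis
    proof (cases "s \<le> T2")
      case True then show ?thesis using T2[of s] by (auto simp: dist_real_def)
    next
      case False2: False
      then show ?thesis using B[of "\<phi> s"] False by auto
    qed
  qed
  then show ?thesis by blast
qed

lemma final_lem:
  fixes A H X :: "real \<Rightarrow> real"
  assumes mA: "A \<in> borel_measurable (lebesgue_on UNIV)"
    and mH: "H \<in> borel_measurable (lebesgue_on UNIV)"
    and mX: "X \<in> borel_measurable (lebesgue_on UNIV)"
    and bA: "\<And>s. \<bar>A s\<bar> \<le> 2" and bH: "\<And>s. \<bar>H s\<bar> \<le> MH"
    and bX: "\<And>s. \<bar>X s\<bar> \<le> K * exp (- c * \<bar>s\<bar>)" and c: "c > 0"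
  shows "(\<lambda>s. A s * H s * X s) absolutely_integrable_on UNIV"
proof (rule measurable_bounded_by_integrable_imp_absolutely_integrable)
  show "(\<lambda>s. A s * H s * X s) \<in> borel_measurable (lebesgue_on UNIV)" using mA mH mX by measurable
  show "UNIV \<in> sets lebesgue" by simp
  have ie: "(\<lambda>x. exp (- c * \<bar>x\<bar>)) integrable_on UNIV"
  proof -
    have "(\<lambda>x. exp (- c * x)) absolutely_integrable_on {0..}"
      by (rule nonnegative_absolutely_integrable_1[OF integrable_on_exp_minus_to_infinity[OF c]]) auto
    then have "integrable lebesgue (\<lambda>x. indicator {0..} x *\<^sub>R exp (- c * x))"
      by (simp add: set_integrable_def)
    then have i0: "integrable lborel (\<lambda>x. indicator {0..} x *\<^sub>R exp (- c * x))"
      by (subst (asm) integrable_completion) auto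
    define h0 where "h0 = (\<lambda>x::real. indicator {0..} x *\<^sub>R exp (- c * x))"
    have i0': "integrable lborel h0" using i0 by (simp add: h0_def)
    have i1: "integrable lborel (\<lambda>x. h0 (0 + (-1) * x))"
      using lborel_integrable_real_affine_iff[of "-1" h0 0] i0' by simp
    have "integrable lborel (\<lambda>x. h0 x + h0 (0 + (-1) * x))"
      using i0' i1 by (rule Bochner_Integration.integrable_add)
    then have "integrable lborel (\<lambda>x. exp (- c * \<bar>x\<bar>))"
    proof (rule Bochner_Integration.integrable_bound)
      show "(\<lambda>x. exp (- c * \<bar>x\<bar>)) \<in> borel_measurable lborel" by measurable
      show "AE x in lborel. norm (exp (- c * \<bar>x\<bar>)) \<le> norm (h0 x + h0 (0 + - 1 * x))"
        by (rule AE_I2) (auto simp: h0_def indicator_def)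
    qed
    then have "integrable lebesgue (\<lambda>x. exp (- c * \<bar>x\<bar>))"
      by (subst integrable_completion) auto
    then have "(\<lambda>x. exp (- c * \<bar>x\<bar>)) absolutely_integrable_on UNIV" by (simp add: set_integrable_def)
    then show ?thesis using set_lebesgue_integral_eq_integral(1) by blast
  qed
  then show "(\<lambda>x. 2 * MH * K * exp (- c * \<bar>x\<bar>)) integrable_on UNIV"
    using integrable_cmul[OF ie, of "2 * MH * K"] by (simp only: real_scaleR_def)
  fix s
  have "norm (A s * H s * X s) = \<bar>A s\<bar> * \<bar>H s\<bar> * \<bar>X s\<bar>" by (simp add: abs_mult)
  also have "\<dots> \<le> 2 * MH * (K * exp (- c * \<bar>s\<bar>))"
    by (intro mult_mono bA bH bX) (auto intro: order.trans[OF abs_ge_zero bH])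
  finally show "norm (A s * H s * X s) \<le> 2 * MH * K * exp (- c * \<bar>s\<bar>)" by (simp add: mult.assoc)
qed


lemma Ck_facts:
  assumes C: "C_k_on 4 U f"
  shows "continuous_on U f" "continuous_on U (partial_x f)" "continuous_on U (partial_y f)"
proof -
  have "continuous_on U (iter_partial [] f)" "continuous_on U (iter_partial [False] f)" "continuous_on U (iter_partial [True] f)"
    using C unfolding C_k_on_def by (auto simp del: iter_partial.simps)
  then show "continuous_on U f" "continuous_on U (partial_x f)" "continuous_on U (partial_y f)" by simp_all
qed

lemma tan_lims:
  fixes \<alpha> \<beta> :: real and f g :: "real \<times> real \<Rightarrow> real" and l :: "real \<Rightarrow> real \<times> real"
  assumes U: "open U" "(0,0) \<in> U"
    and f0: "f (0, 0) = 0" "partial_x f (0, 0) = 0" "partial_y f (0, 0) = 0"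
    and g0: "g (0, 0) = 0" "partial_x g (0, 0) = 0" "partial_y g (0, 0) = 0"
    and f_C4: "C_k_on 4 U f" and g_C4: "C_k_on 4 U g"
    and sol: "\<And>s. (l has_vector_derivative
                 (- \<alpha> * fst (l s) + f (l s), \<beta> * snd (l s) + g (l s))) (at s)"
    and lim: "(l \<longlongrightarrow> (0, 0)) F"
    and dir: "((\<lambda>s. l s /\<^sub>R norm (l s)) \<longlongrightarrow> (p1, p2)) F"
    and nz: "(p1, p2) \<noteq> (0, 0)" and nz2: "(-\<alpha>*p1)\<^sup>2 + (\<beta>*p2)\<^sup>2 \<noteq> 0"
  shows "(tan_u l \<longlongrightarrow> (-\<alpha>*p1) / sqrt ((-\<alpha>*p1)\<^sup>2 + (\<beta>*p2)\<^sup>2)) F"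
    "(tan_v l \<longlongrightarrow> (\<beta>*p2) / sqrt ((-\<alpha>*p1)\<^sup>2 + (\<beta>*p2)\<^sup>2)) F"
proof -
  have "((\<lambda>s. norm (l s /\<^sub>R norm (l s))) \<longlongrightarrow> norm (p1, p2)) F" using dir by (rule tendsto_norm)
  moreover have "norm (p1, p2) > 0" using nz by (simp add: zero_prod_def)
  ultimately have "eventually (\<lambda>s. norm (l s /\<^sub>R norm (l s)) > 0) F" by (rule order_tendstoD(1))
  then have ev: "eventually (\<lambda>s. norm (l s) > 0) F"
    by (rule eventually_mono) (auto)
  have a1: "((\<lambda>s. fst (l s) / norm (l s)) \<longlongrightarrow> p1) F"
    using tendsto_fst[OF dir] by (simp add: divide_inverse mult.commute)
  have b1: "((\<lambda>s. snd (l s) / norm (l s)) \<longlongrightarrow> p2) F"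
    using tendsto_snd[OF dir] by (simp add: divide_inverse mult.commute)
  have rf: "((\<lambda>s. f (l s) / norm (l s)) \<longlongrightarrow> 0) F" by (rule small_tendsto[OF U f_C4 f0 lim])
  have rg: "((\<lambda>s. g (l s) / norm (l s)) \<longlongrightarrow> 0) F" by (rule small_tendsto[OF U g_C4 g0 lim])
  define P where "P s = - \<alpha> * (fst (l s) / norm (l s)) + f (l s) / norm (l s)" for s
  define Q where "Q s = \<beta> * (snd (l s) / norm (l s)) + g (l s) / norm (l s)" for s
  have "(P \<longlongrightarrow> -\<alpha>*p1 + 0) F" unfolding P_def[abs_def] by (intro tendsto_add tendsto_mult tendsto_const a1 rf)
  then have P: "(P \<longlongrightarrow> -\<alpha>*p1) F" by simp
  have "(Q \<longlongrightarrow> \<beta>*p2 + 0) F" unfolding Q_def[abs_def] by (intro tendsto_add tendsto_mult tendsto_const b1 rg)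
  then have Q: "(Q \<longlongrightarrow> \<beta>*p2) F" by simp
  have vd: "vector_derivative l (at s) = (- \<alpha> * fst (l s) + f (l s), \<beta> * snd (l s) + g (l s))" for s
    using sol[of s] by (rule vector_derivative_at)
  have eu: "eventually (\<lambda>s. P s / sqrt ((P s)\<^sup>2 + (Q s)\<^sup>2) = tan_u l s) F"
    using ev
  proof (rule eventually_mono)
    fix s assume n: "norm (l s) > 0"
    define X where "X = - \<alpha> * fst (l s) + f (l s)"
    define Y where "Y = \<beta> * snd (l s) + g (l s)"
    have PX: "P s = X / norm (l s)" unfolding P_def X_def by (simp only: add_divide_distrib times_divide_eq_right)
    have QY: "Q s = Y / norm (l s)" unfolding Q_def Y_def by (simp only: add_divide_distrib times_divide_eq_right)
    have tu: "tan_u l s = X / sqrt (X\<^sup>2 + Y\<^sup>2)" by (simp add: tan_u_def vd norm_Pair X_def Y_def)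
    show "P s / sqrt ((P s)\<^sup>2 + (Q s)\<^sup>2) = tan_u l s"
      unfolding PX QY tu by (rule scale_lem[OF n, symmetric])
  qed
  have ev2: "eventually (\<lambda>s. Q s / sqrt ((P s)\<^sup>2 + (Q s)\<^sup>2) = tan_v l s) F"
    using ev
  proof (rule eventually_mono)
    fix s assume n: "norm (l s) > 0"
    define X where "X = - \<alpha> * fst (l s) + f (l s)"
    define Y where "Y = \<beta> * snd (l s) + g (l s)"
    have PX: "P s = X / norm (l s)" unfolding P_def X_def by (simp only: add_divide_distrib times_divide_eq_right)
    have QY: "Q s = Y / norm (l s)" unfolding Q_def Y_def by (simp only: add_divide_distrib times_divide_eq_right)
    have tv: "tan_v l s = Y / sqrt (X\<^sup>2 + Y\<^sup>2)" by (simp add: tan_v_def vd norm_Pair X_def Y_def)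
    show "Q s / sqrt ((P s)\<^sup>2 + (Q s)\<^sup>2) = tan_v l s"
      unfolding PX QY tv by (rule scale_lem2[OF n, symmetric])
  qed
  have "((\<lambda>s. P s / sqrt ((P s)\<^sup>2 + (Q s)\<^sup>2)) \<longlongrightarrow> (-\<alpha>*p1) / sqrt ((-\<alpha>*p1)\<^sup>2 + (\<beta>*p2)\<^sup>2)) F"
    using nz2 by (intro tendsto_intros P Q) simp
  then show "(tan_u l \<longlongrightarrow> (-\<alpha>*p1) / sqrt ((-\<alpha>*p1)\<^sup>2 + (\<beta>*p2)\<^sup>2)) F"
    by (rule tendsto_cong[OF eu, THEN iffD1])
  have "((\<lambda>s. Q s / sqrt ((P s)\<^sup>2 + (Q s)\<^sup>2)) \<longlongrightarrow> (\<beta>*p2) / sqrt ((-\<alpha>*p1)\<^sup>2 + (\<beta>*p2)\<^sup>2)) F"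
    using nz2 by (intro tendsto_intros P Q) simp
  then show "(tan_v l \<longlongrightarrow> (\<beta>*p2) / sqrt ((-\<alpha>*p1)\<^sup>2 + (\<beta>*p2)\<^sup>2)) F"
    by (rule tendsto_cong[OF ev2, THEN iffD1])
qed



theorem lemma3:
  fixes \<alpha> \<beta> \<omega> :: real
    and f g h :: "real \<times> real \<Rightarrow> real"
    and l :: "real \<Rightarrow> real \<times> real"
    and U :: "(real \<times> real) set"
  assumes ab: "0 < \<beta>" "\<beta> < \<alpha>"
    and f_an: "real_analytic_at2 f (0, 0)" and g_an: "real_analytic_at2 g (0, 0)"
    and f0: "f (0, 0) = 0" "partial_x f (0, 0) = 0" "partial_y f (0, 0) = 0"
    and g0: "g (0, 0) = 0" "partial_x g (0, 0) = 0" "partial_y g (0, 0) = 0"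
    and U: "open U" "insert (0, 0) (range l) \<subseteq> U"
    and f_C4: "C_k_on 4 U f" and g_C4: "C_k_on 4 U g"
    and h_cont: "continuous_on U h"
    and sol: "\<And>s. (l has_vector_derivative
                 (- \<alpha> * fst (l s) + f (l s), \<beta> * snd (l s) + g (l s))) (at s)"
    and lim_top: "(l \<longlongrightarrow> (0, 0)) at_top"
    and lim_bot: "(l \<longlongrightarrow> (0, 0)) at_bot"
    and dir_top: "((\<lambda>s. l s /\<^sub>R norm (l s)) \<longlongrightarrow> (1, 0)) at_top"
    and dir_bot: "((\<lambda>s. l s /\<^sub>R norm (l s)) \<longlongrightarrow> (0, 1)) at_bot"
  shows "(\<lambda>s. (tan_u l s + tan_v l s) * h (l s) * exp (- oint 0 s (E_fun \<alpha> \<beta> f g l))) absolutely_integrable_on UNIV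
       \<and> (\<lambda>s. (tan_u l s + tan_v l s) * cos (\<omega> * s) * exp (- oint 0 s (E_fun \<alpha> \<beta> f g l))) absolutely_integrable_on UNIV
       \<and> (\<lambda>s. (tan_u l s + tan_v l s) * sin (\<omega> * s) * exp (- oint 0 s (E_fun \<alpha> \<beta> f g l))) absolutely_integrable_on UNIV"
  proof -
  have U0: "(0,0) \<in> U" using U(2) by auto
  have rl: "\<And>s. l s \<in> U" using U(2) by auto
  note fc = Ck_facts[OF f_C4] and gc = Ck_facts[OF g_C4]
  have lc: "continuous_on UNIV l"
    by (intro continuous_at_imp_continuous_on ballI has_vector_derivative_continuous[OF sol])
  have comp: "continuous_on UNIV (\<lambda>s. \<phi> (l s))" if "continuous_on U \<phi>" for \<phi> :: "real\<times>real \<Rightarrow> real"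
    using continuous_on_compose2[OF that lc] rl by auto
  define G where "G s = (- \<alpha> * fst (l s) + f (l s), \<beta> * snd (l s) + g (l s))" for s
  have Gc: "continuous_on UNIV G" unfolding G_def[abs_def]
    by (intro continuous_intros comp fc gc lc)
  have tu: "tan_u l = (\<lambda>s. fst (G s) / norm (G s))"
    by (rule ext) (simp add: tan_u_def G_def vector_derivative_at[OF sol])
  have tv: "tan_v l = (\<lambda>s. snd (G s) / norm (G s))"
    by (rule ext) (simp add: tan_v_def G_def vector_derivative_at[OF sol])
  have bu: "\<bar>tan_u l s\<bar> \<le> 1" for s unfolding tu by (rule fst_norm_le)
  have bv: "\<bar>tan_v l s\<bar> \<le> 1" for s unfolding tv by (rule snd_norm_le)
  have mc: "\<phi> \<in> borel_measurable (lebesgue_on S)" if "continuous_on UNIV \<phi>" "S \<in> sets lebesgue"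
    for \<phi> :: "real \<Rightarrow> real" and S
    using continuous_imp_measurable_on_sets_lebesgue[OF continuous_on_subset[OF that(1)] that(2)] by auto
  have mu: "tan_u l \<in> borel_measurable (lebesgue_on S)" if "S \<in> sets lebesgue" for S
    unfolding tu by (intro borel_measurable_divide mc that continuous_intros Gc)
  have mv: "tan_v l \<in> borel_measurable (lebesgue_on S)" if "S \<in> sets lebesgue" for S
    unfolding tv by (intro borel_measurable_divide mc that continuous_intros Gc)
  define E where "E = E_fun \<alpha> \<beta> f g l"
  have mE: "E \<in> borel_measurable (lebesgue_on S)" if S: "S \<in> sets lebesgue" for S
  proof -
    note m = mu[OF S] mv[OF S] mc[OF comp[OF fc(2)] S] mc[OF comp[OF fc(3)] S]
      mc[OF comp[OF gc(2)] S] mc[OF comp[OF gc(3)] S]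
    show ?thesis unfolding E_def E_fun_def[abs_def] using m by measurable
  qed
  define Bd where "Bd s = \<bar>- \<alpha> + partial_x f (l s)\<bar> + \<bar>\<beta> + partial_y g (l s)\<bar> + \<bar>partial_y f (l s) + partial_x g (l s)\<bar>" for s
  have Bdc: "continuous_on UNIV Bd" unfolding Bd_def[abs_def]
    by (intro continuous_intros comp fc gc)
  have Ebd: "norm (E s) \<le> Bd s" for s
    unfolding E_def E_fun_def Bd_def real_norm_def by (rule E_bound_lem[OF bu bv])
  have Eint: "E integrable_on {a..b}" for a b
    by (rule measurable_bounded_by_integrable_imp_integrable[OF mE _ Ebd])
       (auto intro: integrable_continuous_interval continuous_on_subset[OF Bdc])
  have pl: "((\<lambda>s. \<phi> (l s)) \<longlongrightarrow> \<phi> (0,0)) F" if "continuous_on U \<phi>" "(l \<longlongrightarrow> (0,0)) F"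
    for \<phi> :: "real\<times>real \<Rightarrow> real" and F
  proof -
    have "isCont \<phi> (0,0)" using that(1) U(1) U0 continuous_on_eq_continuous_at by blast
    then show ?thesis using isCont_tendsto_compose[OF _ that(2)] by blast
  qed
  have tt: "(tan_u l \<longlongrightarrow> -1) at_top" "(tan_v l \<longlongrightarrow> 0) at_top"
    using tan_lims[OF U(1) U0 f0 g0 f_C4 g_C4 sol lim_top dir_top] ab by simp_all
  have tb: "(tan_u l \<longlongrightarrow> 0) at_bot" "(tan_v l \<longlongrightarrow> 1) at_bot"
    using tan_lims[OF U(1) U0 f0 g0 f_C4 g_C4 sol lim_bot dir_bot] ab by simp_all
  have "(E \<longlongrightarrow> 0\<^sup>2 * (- \<alpha> + partial_x f (0,0)) + (-1)\<^sup>2 * (\<beta> + partial_y g (0,0))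
      - (-1) * 0 * (partial_y f (0,0) + partial_x g (0,0))) at_top"
    unfolding E_def E_fun_def[abs_def]
    by (intro tendsto_intros tt pl fc gc lim_top)
  then have ET: "(E \<longlongrightarrow> \<beta>) at_top" using f0 g0 by simp
  have "(E \<longlongrightarrow> 1\<^sup>2 * (- \<alpha> + partial_x f (0,0)) + 0\<^sup>2 * (\<beta> + partial_y g (0,0))
      - 0 * 1 * (partial_y f (0,0) + partial_x g (0,0))) at_bot"
    unfolding E_def E_fun_def[abs_def]
    by (intro tendsto_intros tb pl fc gc lim_bot)
  then have EB: "(E \<longlongrightarrow> -\<alpha>) at_bot" using f0 g0 by simp
  define c where "c = \<beta> / 2"
  have c: "c > 0" using ab by (simp add: c_def)
  have "eventually (\<lambda>s. E s > c) at_top" using ET ab by (intro order_tendstoD(1)) (auto simp: c_def)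
  then obtain T1 where T1: "\<And>s. s \<ge> T1 \<Longrightarrow> E s > c" by (auto simp: eventually_at_top_linorder)
  have "eventually (\<lambda>s. E s < -c) at_bot" using EB ab by (intro order_tendstoD(2)) (auto simp: c_def)
  then obtain T2 where T2: "\<And>s. s \<le> T2 \<Longrightarrow> E s < -c" by (auto simp: eventually_at_bot_linorder)
  define T where "T = max (max T1 (-T2)) 0"
  have T0: "T \<ge> 0" by (simp add: T_def)
  have TT1: "T1 \<le> T" unfolding T_def by simp
  have Eup: "E s \<ge> c" if "s \<ge> T" for s using T1[of s] TT1 that by linarith
  have TT2: "-T \<le> T2" unfolding T_def by simp
  have Elow: "E s \<le> -c" if "s \<le> -T" for s using T2[of s] TT2 that by linarith
  have oc: "continuous_on UNIV (\<lambda>s. oint 0 s E)"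
  proof (intro continuous_at_imp_continuous_on ballI)
    fix s0 :: real
    define a where "a = min 0 s0 - 1"
    define b where "b = max 0 s0 + 1"
    have ic: "continuous_on {a..b} (\<lambda>x. integral {a..x} E)"
      by (rule indefinite_integral_continuous_1[OF Eint])
    have eq: "oint 0 s E = integral {a..s} E - integral {a..0} E" if "a \<le> s" for s
    proof (cases "0 \<le> s")
      case True
      have "integral {a..0} E + integral {0..s} E = integral {a..s} E"
        using Henstock_Kurzweil_Integration.integral_combine[where a=a and c=0 and b=s and f=E] Eint True by (simp add: a_def)
      then show ?thesis using True by (simp add: oint_def)
    next
      case False
      have "integral {a..s} E + integral {s..0} E = integral {a..0} E"
        using Henstock_Kurzweil_Integration.integral_combine[where a=a and c=s and b=0 and f=E] Eint False that by simp
      then show ?thesis using False by (simp add: oint_def)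
    qed
    have "isCont (\<lambda>s. integral {a..s} E) s0"
      by (rule continuous_on_interior[OF ic]) (simp add: a_def b_def min_def max_def)
    then have c1: "isCont (\<lambda>s. integral {a..s} E - integral {a..0} E) s0"
      by (intro continuous_intros)
    have "eventually (\<lambda>s. s \<in> {a<..}) (nhds s0)"
      by (rule eventually_nhds_in_open) (auto simp: a_def)
    then have "eventually (\<lambda>s. oint 0 s E = integral {a..s} E - integral {a..0} E) (nhds s0)"
      by (rule eventually_mono) (auto intro: eq)
    then show "isCont (\<lambda>s. oint 0 s E) s0" using c1 by (rule isCont_cong[THEN iffD2])
  qed
  have "compact ((\<lambda>s. oint 0 s E) ` {-T..T})"
    by (rule compact_continuous_image[OF continuous_on_subset[OF oc]]) auto
  then obtain B0 where B0: "\<And>x. x \<in> (\<lambda>s. oint 0 s E) ` {-T..T} \<Longrightarrow> norm x \<le> B0"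
    using compact_imp_bounded bounded_iff by metis
  have B0': "\<bar>oint 0 s E\<bar> \<le> B0" if "-T \<le> s" "s \<le> T" for s using B0[of "oint 0 s E"] that by auto
  have key: "- oint 0 s E \<le> B0 + c * T - c * \<bar>s\<bar>" for s
  proof -
    consider "\<bar>s\<bar> \<le> T" | "s > T" | "s < -T" by linarith
    then show ?thesis
    proof cases
      case 1
      have "c * \<bar>s\<bar> \<le> c * T" using 1 c by (intro mult_left_mono) auto
      moreover have "\<bar>oint 0 s E\<bar> \<le> B0" using 1 by (intro B0') auto
      ultimately show ?thesis by linarith
    next
      case 2
      have "integral {0..T} E + integral {T..s} E = integral {0..s} E"
        using Henstock_Kurzweil_Integration.integral_combine[where a=0 and c=T and b=s and f=E] Eint T0 2 by simp
      moreover have "integral {0..T} E \<ge> - B0"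
        using B0'[of T] T0 by (simp add: oint_def)
      moreover have "integral {T..s} (\<lambda>_. c) \<le> integral {T..s} E"
        by (rule integral_le) (use Eint Eup in auto)
      moreover have "integral {T..s} (\<lambda>_. c) = (s - T) * c" using 2 by simp
      ultimately have "integral {0..s} E \<ge> - B0 + (s - T) * c" by linarith
      then show ?thesis using 2 T0 by (simp add: oint_def algebra_simps)
    next
      case 3
      have "integral {s..-T} E + integral {-T..0} E = integral {s..0} E"
        using Henstock_Kurzweil_Integration.integral_combine[where a=s and c="-T" and b=0 and f=E] Eint T0 3 by simp
      moreover have "integral {-T..0} E \<le> B0"
      proof (cases "T = 0")
        case True then show ?thesis using B0'[of 0] by simp
      next
        case False
        then show ?thesis using B0'[of "-T"] T0 by (simp add: oint_def)
      qed
      moreover have "integral {s..-T} E \<le> integral {s..-T} (\<lambda>_. -c)"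
        by (rule integral_le) (use Eint Elow in auto)
      moreover have "integral {s..-T} (\<lambda>_. -c) = (-T - s) * (-c)" using 3 by simp
      ultimately have "integral {s..0} E \<le> B0 + (-T - s) * (-c)" by linarith
      moreover have "s < 0" using 3 T0 by simp
      ultimately show ?thesis using T0 c by (simp add: oint_def algebra_simps)
    qed
  qed
  have Xb: "\<bar>exp (- oint 0 s E)\<bar> \<le> exp (B0 + c * T) * exp (- c * \<bar>s\<bar>)" for s
  proof -
    have "exp (- oint 0 s E) \<le> exp (B0 + c * T - c * \<bar>s\<bar>)" using key[of s] by simp
    then show ?thesis by (simp add: exp_diff exp_minus field_simps)
  qed
  have mX: "(\<lambda>s. exp (- oint 0 s E)) \<in> borel_measurable (lebesgue_on UNIV)"
    by (intro mc continuous_intros oc) simp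
  have mA: "(\<lambda>s. tan_u l s + tan_v l s) \<in> borel_measurable (lebesgue_on UNIV)"
  proof -
    have "tan_u l \<in> borel_measurable (lebesgue_on UNIV)" "tan_v l \<in> borel_measurable (lebesgue_on UNIV)"
      using mu[of UNIV] mv[of UNIV] by auto
    then show ?thesis by measurable
  qed
  have bA: "\<bar>tan_u l s + tan_v l s\<bar> \<le> 2" for s using bu[of s] bv[of s] by linarith
  have hc: "continuous_on UNIV (\<lambda>s. h (l s))" by (rule comp[OF h_cont])
  obtain Mh where Mh: "\<And>s. \<bar>h (l s)\<bar> \<le> Mh"
    using bounded_lims[OF hc pl[OF h_cont lim_top] pl[OF h_cont lim_bot]] by blast
  have r1: "(\<lambda>s. (tan_u l s + tan_v l s) * h (l s) * exp (- oint 0 s E)) absolutely_integrable_on UNIV"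
    by (rule final_lem[OF mA mc[OF hc] mX bA Mh Xb c]) simp
  have r2: "(\<lambda>s. (tan_u l s + tan_v l s) * cos (\<omega> * s) * exp (- oint 0 s E)) absolutely_integrable_on UNIV"
    by (rule final_lem[OF mA mc[of "\<lambda>s. cos (\<omega> * s)"] mX bA abs_cos_le_one Xb c]) (auto intro: continuous_intros)
  have r3: "(\<lambda>s. (tan_u l s + tan_v l s) * sin (\<omega> * s) * exp (- oint 0 s E)) absolutely_integrable_on UNIV"
    by (rule final_lem[OF mA mc[of "\<lambda>s. sin (\<omega> * s)"] mX bA abs_sin_le_one Xb c]) (auto intro: continuous_intros)
  show ?thesis using r1 r2 r3 unfolding E_def by blast
qed

end
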